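(* Let $S$ be a three-level system with Hamiltonian $H_S=\sum_{i=0}^2E_i|i\rangle\langle i|$ where $E_2-E_1=E_1-E_0=\Delta E>0$. Let $\rho$ be a state with $\langle1|\rho|2\rangle=0$, and let $\mathcal{T}$ be any Thermal Operation on $S$. Then $$|\langle1|\mathcal{T}(\rho)|2\rangle|\le e^{-\beta\Delta E}\,|\langle0|\rho|1\rangle|.$$
   Context: $\beta>0$. A Thermal Operation on $S$ is a channel $\mathcal{T}(\rho)=\mathrm{tr}_B[U(\rho\otimes\gamma_B)U^\dagger]$ with $B$ any finite-dimensional system, $H_B$ any Hamiltonian, $\gamma_B=e^{-\beta H_B}/\mathrm{tr}\,e^{-\beta H_B}$, and $U$ unitary with $[U,H_S\otimes\mathbb{I}+\mathbb{I}\otimes H_B]=0$. *)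

theory Defs
  imports Complex_Main "Jordan_Normal_Form.Matrix" "Jordan_Normal_Form.Schur_Decomposition"
begin

definition mtrace :: "complex mat \<Rightarrow> complex" where
  "mtrace A = (\<Sum>i<dim_row A. A $$ (i,i))"

definition hermitian_mat :: "nat \<Rightarrow> complex mat \<Rightarrow> bool" where
  "hermitian_mat n A \<longleftrightarrow> A \<in> carrier_mat n n \<and> mat_adjoint A = A"

definition unitary_mat :: "nat \<Rightarrow> complex mat \<Rightarrow> bool" where
  "unitary_mat n U \<longleftrightarrow> U \<in> carrier_mat n n \<and>
     mat_adjoint U * U = 1\<^sub>m n \<and> U * mat_adjoint U = 1\<^sub>m n"

definition psd_mat :: "nat \<Rightarrow> complex mat \<Rightarrow> bool" where
  "psd_mat n A \<longleftrightarrow> A \<in> carrier_mat n n \<and>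
     (\<forall>v \<in> carrier_vec n. (A *\<^sub>v v) \<bullet>c v \<in> \<real> \<and> 0 \<le> Re ((A *\<^sub>v v) \<bullet>c v))"

definition density_mat :: "nat \<Rightarrow> complex mat \<Rightarrow> bool" where
  "density_mat n \<rho> \<longleftrightarrow> psd_mat n \<rho> \<and> hermitian_mat n \<rho> \<and> mtrace \<rho> = 1"

(* Kronecker (tensor) product; basis index of |i>|j> is i * dim_B + j *)
definition kron :: "complex mat \<Rightarrow> complex mat \<Rightarrow> complex mat" where
  "kron A B = Matrix.mat (dim_row A * dim_row B) (dim_col A * dim_col B)
     (\<lambda>(i,j). A $$ (i div dim_row B, j div dim_col B) * B $$ (i mod dim_row B, j mod dim_col B))"

definition ptrace2 :: "nat \<Rightarrow> complex mat \<Rightarrow> complex mat" where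
  "ptrace2 dB M = Matrix.mat (dim_row M div dB) (dim_col M div dB)
     (\<lambda>(i,k). \<Sum>j<dB. M $$ (i * dB + j, k * dB + j))"

(* exp(-beta H) for Hermitian H, via the spectral theorem / functional calculus:
   H = V diag(d) V^dagger with V unitary and d real, exp(-beta H) = V diag(exp(-beta d)) V^dagger.
   (This is independent of the chosen decomposition.) *)
definition is_exp_neg_beta :: "real \<Rightarrow> nat \<Rightarrow> complex mat \<Rightarrow> complex mat \<Rightarrow> bool" where
  "is_exp_neg_beta \<beta> n H E \<longleftrightarrow>
     (\<exists>V d. unitary_mat n V \<and>
        H = V * mat_diag n (\<lambda>i. complex_of_real (d i)) * mat_adjoint V \<and>
        E = V * mat_diag n (\<lambda>i. complex_of_real (exp (- \<beta> * d i))) * mat_adjoint V)"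

definition is_gibbs_state :: "real \<Rightarrow> nat \<Rightarrow> complex mat \<Rightarrow> complex mat \<Rightarrow> bool" where
  "is_gibbs_state \<beta> n H \<gamma> \<longleftrightarrow>
     (\<exists>E. is_exp_neg_beta \<beta> n H E \<and> \<gamma> = (1 / mtrace E) \<cdot>\<^sub>m E)"

definition thermal_operation ::
  "real \<Rightarrow> nat \<Rightarrow> complex mat \<Rightarrow> (complex mat \<Rightarrow> complex mat) \<Rightarrow> bool" where
  "thermal_operation \<beta> n HS T \<longleftrightarrow>
     (\<exists>dB HB \<gamma> U. 0 < dB \<and> hermitian_mat dB HB \<and> is_gibbs_state \<beta> dB HB \<gamma> \<and>
        unitary_mat (n * dB) U \<and>
        U * (kron HS (1\<^sub>m dB) + kron (1\<^sub>m n) HB) = (kron HS (1\<^sub>m dB) + kron (1\<^sub>m n) HB) * U \<and>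
        (\<forall>\<rho> \<in> carrier_mat n n. T \<rho> = ptrace2 dB (U * kron \<rho> \<gamma> * mat_adjoint U)))"

end

theory Submission
  imports Defs
begin


lemma adj_carrier[simp]: "mat_adjoint A \<in> carrier_mat (dim_col A) (dim_row A)"
  unfolding mat_adjoint_def by auto
lemma adj_dim[simp]: "dim_row (mat_adjoint A) = dim_col A" "dim_col (mat_adjoint A) = dim_row A"
  unfolding mat_adjoint_def by auto
lemma adj_index[simp]: "i < dim_col A \<Longrightarrow> j < dim_row A \<Longrightarrow> mat_adjoint A $$ (i,j) = cnj (A $$ (j,i))"
  unfolding mat_adjoint_def by (simp add: mat_of_rows_index)

lemma sum_prod_index: fixes n m :: nat shows "(\<Sum>i<n*m. f i) = (\<Sum>a<n. \<Sum>b<m. f (a*m+b))"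
proof (induction n)
  case 0 then show ?case by simp
next
  case (Suc n)
  have "(\<Sum>i<Suc n*m. f i) = (\<Sum>i<n*m+m. f i)" by (simp add: add.commute)
  also have "\<dots> = (\<Sum>i<n*m. f i) + (\<Sum>i=n*m..<n*m+m. f i)" by (metis atLeast0LessThan le_add1 sum.atLeastLessThan_concat zero_le)
  also have "(\<Sum>i=n*m..<n*m+m. f i) = (\<Sum>b<m. f (n*m+b))"
    using sum.shift_bounds_nat_ivl[of f 0 "n*m" m] by (simp add: lessThan_atLeast0 add.commute)
  finally show ?case using Suc by simp
qed

lemma kron_dim[simp]: "dim_row (kron A B) = dim_row A * dim_row B" "dim_col (kron A B) = dim_col A * dim_col B"
  unfolding kron_def by auto

lemma kron_index: "i < dim_row A * dim_row B \<Longrightarrow> j < dim_col A * dim_col B \<Longrightarrow>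
  kron A B $$ (i,j) = A $$ (i div dim_row B, j div dim_col B) * B $$ (i mod dim_row B, j mod dim_col B)"
  unfolding kron_def by simp

lemma kron_carrier: "A \<in> carrier_mat p q \<Longrightarrow> B \<in> carrier_mat r s \<Longrightarrow> kron A B \<in> carrier_mat (p*r) (q*s)"
  by auto

lemma mult_entry: "i < dim_row A \<Longrightarrow> j < dim_col B \<Longrightarrow> dim_col A = dim_row B \<Longrightarrow> (A * B) $$ (i,j) = (\<Sum>k<dim_row B. A $$ (i,k) * B $$ (k,j))"
  by (auto simp: scalar_prod_def atLeast0LessThan intro!: sum.cong)

lemma kron_mult:
  assumes A: "A \<in> carrier_mat p q" and B: "B \<in> carrier_mat r s" and C: "C \<in> carrier_mat q t"
    and D: "D \<in> carrier_mat s u" and r: "r > 0" and s: "s > 0" and u: "u > 0"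
  shows "kron A B * kron C D = kron (A*C) (B*D)"
proof (rule eq_matI)
  fix i j assume i: "i < dim_row (kron (A*C) (B*D))" and j: "j < dim_col (kron (A*C) (B*D))"
  have i': "i < p*r" and j': "j < t*u" using i j A B C D by auto
  have id: "i div r < p" "i mod r < r" "j div u < t" "j mod u < u"
    using i' j' r u by (auto simp: less_mult_imp_div_less mult.commute)
  have "(kron A B * kron C D) $$ (i,j) = (\<Sum>k<q*s. kron A B $$ (i,k) * kron C D $$ (k,j))"
    using i' j' A B C D by (subst mult_entry) auto
  also have "\<dots> = (\<Sum>a<q. \<Sum>b<s. kron A B $$ (i,a*s+b) * kron C D $$ (a*s+b,j))"
    by (rule sum_prod_index)
  also have "\<dots> = (\<Sum>a<q. \<Sum>b<s. (A $$ (i div r, a) * C $$ (a, j div u)) * (B $$ (i mod r, b) * D $$ (b, j mod u)))"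
  proof (intro sum.cong refl)
    fix a b assume a: "a \<in> {..<q}" and b: "b \<in> {..<s}"
    have ab: "a*s+b < q*s" using a b
      by (metis lessThan_iff add.commute mult.commute mult_Suc_right nat_add_left_cancel_less less_le_trans Suc_leI mult_le_mono2)
    show "kron A B $$ (i,a*s+b) * kron C D $$ (a*s+b,j) = (A $$ (i div r, a) * C $$ (a, j div u)) * (B $$ (i mod r, b) * D $$ (b, j mod u))"
      using A B C D i' j' ab b by (simp add: kron_index)
  qed
  also have "\<dots> = (\<Sum>a<q. A $$ (i div r, a) * C $$ (a, j div u)) * (\<Sum>b<s. B $$ (i mod r, b) * D $$ (b, j mod u))"
    by (simp add: sum_product mult_ac)
  also have "\<dots> = kron (A*C) (B*D) $$ (i,j)"
  proof -
    have "(A*C) $$ (i div r, j div u) = (\<Sum>a<q. A $$ (i div r, a) * C $$ (a, j div u))"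
      using A C id by (subst mult_entry) auto
    moreover have "(B*D) $$ (i mod r, j mod u) = (\<Sum>b<s. B $$ (i mod r, b) * D $$ (b, j mod u))"
      using B D id by (subst mult_entry) auto
    moreover have "kron (A*C) (B*D) $$ (i,j) = (A*C) $$ (i div r, j div u) * (B*D) $$ (i mod r, j mod u)"
      using kron_index[of i "A*C" "B*D" j] A B C D i' j' by (simp del: index_mult_mat(1))
    ultimately show ?thesis by simp
  qed
  finally show "(kron A B * kron C D) $$ (i,j) = kron (A*C) (B*D) $$ (i,j)" .
qed (use A B C D in auto)

lemma kron_adj: "mat_adjoint (kron A B) = kron (mat_adjoint A) (mat_adjoint B)"
proof (rule eq_matI)
  fix i j assume i: "i < dim_row (kron (mat_adjoint A) (mat_adjoint B))" and j: "j < dim_col (kron (mat_adjoint A) (mat_adjoint B))"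
  then have "dim_row B > 0" "dim_col B > 0" by (auto intro!: Nat.gr0I)
  moreover have "i div dim_col B < dim_col A" "j div dim_row B < dim_row A"
    using i j by (auto simp: less_mult_imp_div_less)
  ultimately show "mat_adjoint (kron A B) $$ (i, j) = kron (mat_adjoint A) (mat_adjoint B) $$ (i, j)"
    using i j by (simp add: kron_index)
qed auto

lemma lt_idx: "a < n \<Longrightarrow> j < (m::nat) \<Longrightarrow> a*m+j < n*m"
  by (metis add.commute add_less_mono1 less_le_trans mult.commute mult_Suc_right mult_le_mono2 Suc_leI nat_add_left_cancel_less)

lemma kronI_left:
  assumes V: "V \<in> carrier_mat m m" and M: "M \<in> carrier_mat (n*m) c" and a: "a < n" and j: "j < m" and y: "y < c"
  shows "(kron (1\<^sub>m n) V * M) $$ (a*m+j, y) = (\<Sum>b<m. V $$ (j,b) * M $$ (a*m+b, y))"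
proof -
  have "(kron (1\<^sub>m n) V * M) $$ (a*m+j, y) = (\<Sum>k<n*m. kron (1\<^sub>m n) V $$ (a*m+j,k) * M $$ (k,y))"
    using V M a j y lt_idx[OF a j] by (subst mult_entry) auto
  also have "\<dots> = (\<Sum>a'<n. \<Sum>b<m. kron (1\<^sub>m n) V $$ (a*m+j,a'*m+b) * M $$ (a'*m+b,y))"
    by (rule sum_prod_index)
  also have "\<dots> = (\<Sum>a'<n. \<Sum>b<m. (if a = a' then V $$ (j,b) * M $$ (a'*m+b,y) else 0))"
    using V a j lt_idx[OF a j] lt_idx by (intro sum.cong refl) (auto simp: kron_index)
  also have "\<dots> = (\<Sum>b<m. V $$ (j,b) * M $$ (a*m+b, y))"
    using a by (simp add: sum.swap[of _ "{..<m}"] )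
  finally show ?thesis .
qed

lemma kronI_right:
  assumes V: "V \<in> carrier_mat m m" and M: "M \<in> carrier_mat r (n*m)" and a: "a < n" and j: "j < m" and x: "x < r"
  shows "(M * kron (1\<^sub>m n) V) $$ (x, a*m+j) = (\<Sum>b<m. M $$ (x, a*m+b) * V $$ (b,j))"
proof -
  have "(M * kron (1\<^sub>m n) V) $$ (x, a*m+j) = (\<Sum>k<n*m. M $$ (x,k) * kron (1\<^sub>m n) V $$ (k, a*m+j))"
    using V M a j x lt_idx[OF a j] by (subst mult_entry) auto
  also have "\<dots> = (\<Sum>a'<n. \<Sum>b<m. M $$ (x,a'*m+b) * kron (1\<^sub>m n) V $$ (a'*m+b, a*m+j))"
    by (rule sum_prod_index)
  also have "\<dots> = (\<Sum>a'<n. \<Sum>b<m. (if a = a' then M $$ (x,a'*m+b) * V $$ (b,j) else 0))"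
    using V a j lt_idx[OF a j] lt_idx by (intro sum.cong refl) (auto simp: kron_index)
  also have "\<dots> = (\<Sum>b<m. M $$ (x, a*m+b) * V $$ (b,j))"
    using a by (simp add: sum.swap[of _ "{..<m}"] )
  finally show ?thesis .
qed

lemma ptrace_index: "i < dim_row M div m \<Longrightarrow> k < dim_col M div m \<Longrightarrow>
   ptrace2 m M $$ (i,k) = (\<Sum>j<m. M $$ (i*m+j, k*m+j))"
  unfolding ptrace2_def by simp

lemma ptrace_conj:
  assumes V: "V \<in> carrier_mat m m" and m: "m > 0" and VV: "mat_adjoint V * V = 1\<^sub>m m"
    and M: "M \<in> carrier_mat (n*m) (n*m)"
  shows "ptrace2 m (kron (1\<^sub>m n) V * M * kron (1\<^sub>m n) (mat_adjoint V)) = ptrace2 m M"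
proof (rule eq_matI)
  let ?W = "kron (1\<^sub>m n) V" and ?Wa = "kron (1\<^sub>m n) (mat_adjoint V)"
  have Vc: "mat_adjoint V \<in> carrier_mat m m" using V by (metis adj_carrier carrier_matD)
  have WM: "?W * M \<in> carrier_mat (n*m) (n*m)" using V M by auto
  show "dim_row (ptrace2 m (?W * M * ?Wa)) = dim_row (ptrace2 m M)"
       "dim_col (ptrace2 m (?W * M * ?Wa)) = dim_col (ptrace2 m M)"
    using V M Vc unfolding ptrace2_def by auto
  fix i k assume "i < dim_row (ptrace2 m M)" "k < dim_col (ptrace2 m M)"
  then have i: "i < n" and k: "k < n" using M m unfolding ptrace2_def by auto
  have "ptrace2 m (?W * M * ?Wa) $$ (i,k) = (\<Sum>j<m. (?W * M * ?Wa) $$ (i*m+j, k*m+j))"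
    using i k V M Vc m by (subst ptrace_index) auto
  also have "\<dots> = (\<Sum>j<m. \<Sum>b'<m. (\<Sum>b<m. V $$ (j,b) * M $$ (i*m+b, k*m+b')) * cnj (V $$ (j,b')))"
  proof (intro sum.cong refl)
    fix j assume j: "j \<in> {..<m}"
    have "(?W * M * ?Wa) $$ (i*m+j, k*m+j) = (\<Sum>b'<m. (?W*M) $$ (i*m+j, k*m+b') * mat_adjoint V $$ (b',j))"
      using kronI_right[OF Vc WM k _ lt_idx[OF i]] j by auto
    also have "\<dots> = (\<Sum>b'<m. (\<Sum>b<m. V $$ (j,b) * M $$ (i*m+b, k*m+b')) * cnj (V $$ (j,b')))"
      using kronI_left[OF V M i _ lt_idx[OF k]] j V by (intro sum.cong refl) auto
    finally show "(?W * M * ?Wa) $$ (i*m+j, k*m+j) = \<dots>" .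
  qed
  also have "\<dots> = (\<Sum>j<m. \<Sum>b'<m. \<Sum>b<m. V $$ (j,b) * M $$ (i*m+b, k*m+b') * cnj (V $$ (j,b')))"
    by (simp only: sum_distrib_right)
  also have "\<dots> = (\<Sum>b'<m. \<Sum>j<m. \<Sum>b<m. V $$ (j,b) * M $$ (i*m+b, k*m+b') * cnj (V $$ (j,b')))"
    by (rule sum.swap)
  also have "\<dots> = (\<Sum>b'<m. \<Sum>b<m. \<Sum>j<m. V $$ (j,b) * M $$ (i*m+b, k*m+b') * cnj (V $$ (j,b')))"
    by (rule sum.cong[OF refl], rule sum.swap)
  also have "\<dots> = (\<Sum>b<m. \<Sum>b'<m. \<Sum>j<m. V $$ (j,b) * M $$ (i*m+b, k*m+b') * cnj (V $$ (j,b')))"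
    by (rule sum.swap)
  also have "\<dots> = (\<Sum>b<m. \<Sum>b'<m. M $$ (i*m+b, k*m+b') * (\<Sum>j<m. mat_adjoint V $$ (b',j) * V $$ (j,b)))"
  proof (intro sum.cong refl)
    fix b b' assume b': "b' \<in> {..<m}"
    have "(\<Sum>j<m. V $$ (j,b) * M $$ (i*m+b, k*m+b') * cnj (V $$ (j,b'))) = (\<Sum>j<m. M $$ (i*m+b, k*m+b') * (mat_adjoint V $$ (b',j) * V $$ (j,b)))"
      using V b' by (intro sum.cong refl) auto
    then show "(\<Sum>j<m. V $$ (j,b) * M $$ (i*m+b, k*m+b') * cnj (V $$ (j,b'))) = M $$ (i*m+b, k*m+b') * (\<Sum>j<m. mat_adjoint V $$ (b',j) * V $$ (j,b))"
      by (simp only: sum_distrib_left)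
  qed
  also have "\<dots> = (\<Sum>b<m. \<Sum>b'<m. M $$ (i*m+b, k*m+b') * (1\<^sub>m m) $$ (b',b))"
  proof (intro sum.cong refl)
    fix b b' assume "b \<in> {..<m}" "b' \<in> {..<m}"
    then show "M $$ (i*m+b, k*m+b') * (\<Sum>j<m. mat_adjoint V $$ (b',j) * V $$ (j,b)) = M $$ (i*m+b, k*m+b') * (1\<^sub>m m) $$ (b',b)"
      using V Vc by (subst VV[symmetric], subst mult_entry) auto
  qed
  also have "\<dots> = (\<Sum>b<m. M $$ (i*m+b, k*m+b))"
    by (simp add: if_distrib cong: if_cong)
  also have "\<dots> = ptrace2 m M $$ (i,k)"
    using i k M m by (subst ptrace_index) auto
  finally show "ptrace2 m (?W * M * ?Wa) $$ (i,k) = ptrace2 m M $$ (i,k)" .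
qed

lemma row_part:
  fixes f :: "nat \<Rightarrow> real"
  assumes "\<And>y. f y \<ge> 0" "a < 3"
  shows "(\<Sum>b<m. f (a*m+b)) \<le> (\<Sum>y<3*m. f y)"
proof -
  have "(\<Sum>y<3*m. f y) = (\<Sum>a'<3. \<Sum>b<m. f (a'*m+b))" by (rule sum_prod_index)
  moreover have "(\<Sum>b<m. f (a*m+b)) \<le> (\<Sum>a'<3. \<Sum>b<m. f (a'*m+b))"
    using assms by (intro member_le_sum[where f="\<lambda>a'. \<Sum>b<m. f (a'*m+b)"]) (auto intro: sum_nonneg)
  ultimately show ?thesis by simp
qed

lemma core:
  fixes u :: "nat \<Rightarrow> nat \<Rightarrow> complex" and g d Es :: "nat \<Rightarrow> real" and r :: complex
  assumes gnn: "\<And>b. b < m \<Longrightarrow> g b \<ge> 0" and gsum: "(\<Sum>b<m. g b) = 1"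
    and gscale: "\<And>j b. j < m \<Longrightarrow> b < m \<Longrightarrow> d b = d j + \<Delta>E \<Longrightarrow> g b = exp (- \<beta> * \<Delta>E) * g j"
    and E10: "Es 1 - Es 0 = \<Delta>E"
    and energy: "\<And>x y. x < 3*m \<Longrightarrow> y < 3*m \<Longrightarrow> u x y \<noteq> 0 \<Longrightarrow> Es (x div m) + d (x mod m) = Es (y div m) + d (y mod m)"
    and rows: "\<And>x. x < 3*m \<Longrightarrow> (\<Sum>y<3*m. (cmod (u x y))\<^sup>2) = 1"
  shows "cmod (\<Sum>j<m. \<Sum>b<m. u (m+j) b * r * g b * cnj (u (2*m+j) (m+b))) \<le> exp (- \<beta> * \<Delta>E) * cmod r"
proof -
  let ?e = "exp (- \<beta> * \<Delta>E)"
  let ?A = "\<lambda>j b. cmod (u (m+j) b)" and ?B = "\<lambda>j b. cmod (u (2*m+j) (m+b))"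
  have tm: "cmod (u (m+j) b * r * g b * cnj (u (2*m+j) (m+b))) \<le> cmod r * ?e * (g j * (((?A j b)\<^sup>2 + (?B j b)\<^sup>2) / 2))"
    if j: "j < m" and b: "b < m" for j b
  proof (cases "u (m+j) b = 0")
    case True
    then show ?thesis using gnn[OF j] by simp
  next
    case False
    have x: "m + j < 3*m" "b < 3*m" using j b by auto
    have "Es ((m+j) div m) + d ((m+j) mod m) = Es (b div m) + d (b mod m)"
      using energy[OF x False] .
    then have "Es 1 + d j = Es 0 + d b" using j b by simp
    then have "d b = d j + \<Delta>E" using E10 by simp
    then have gb: "g b = ?e * g j" using gscale j b by blast
    have am: "?A j b * ?B j b \<le> ((?A j b)\<^sup>2 + (?B j b)\<^sup>2) / 2"
    proof -
      have "0 \<le> (?A j b - ?B j b)\<^sup>2" by simp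
      then show ?thesis unfolding power2_diff by (simp add: field_simps)
    qed
    have "cmod (u (m+j) b * r * g b * cnj (u (2*m+j) (m+b))) = cmod r * ?e * (g j * (?A j b * ?B j b))"
      using gb gnn[OF j] by (simp add: norm_mult abs_mult mult_ac)
    also have "\<dots> \<le> cmod r * ?e * (g j * (((?A j b)\<^sup>2 + (?B j b)\<^sup>2) / 2))"
      using am gnn[OF j] by (intro mult_left_mono) auto
    finally show ?thesis .
  qed
  have "cmod (\<Sum>j<m. \<Sum>b<m. u (m+j) b * r * g b * cnj (u (2*m+j) (m+b)))
      \<le> (\<Sum>j<m. \<Sum>b<m. cmod (u (m+j) b * r * g b * cnj (u (2*m+j) (m+b))))"
    by (rule order_trans[OF norm_sum sum_mono[OF norm_sum]])
  also have "\<dots> \<le> (\<Sum>j<m. \<Sum>b<m. cmod r * ?e * (g j * (((?A j b)\<^sup>2 + (?B j b)\<^sup>2) / 2)))"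
    using tm by (intro sum_mono) auto
  also have "\<dots> = (\<Sum>j<m. cmod r * ?e * (g j * ((\<Sum>b<m. (?A j b)\<^sup>2) + (\<Sum>b<m. (?B j b)\<^sup>2)) / 2))"
  proof (rule sum.cong[OF refl])
    fix j
    have "(\<Sum>b<m. cmod r * ?e * (g j * (((?A j b)\<^sup>2 + (?B j b)\<^sup>2) / 2)))
        = (cmod r * ?e * g j / 2) * (\<Sum>b<m. ((?A j b)\<^sup>2 + (?B j b)\<^sup>2))"
    proof -
      have "(\<Sum>b<m. cmod r * ?e * (g j * (((?A j b)\<^sup>2 + (?B j b)\<^sup>2) / 2)))
        = (\<Sum>b<m. (cmod r * ?e * g j / 2) * ((?A j b)\<^sup>2 + (?B j b)\<^sup>2))"
        by (rule sum.cong[OF refl]) simp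
      then show ?thesis by (simp only: sum_distrib_left)
    qed
    also have "\<dots> = cmod r * ?e * (g j * ((\<Sum>b<m. (?A j b)\<^sup>2) + (\<Sum>b<m. (?B j b)\<^sup>2)) / 2)"
      by (simp add: sum.distrib)
    finally show "(\<Sum>b<m. cmod r * ?e * (g j * (((?A j b)\<^sup>2 + (?B j b)\<^sup>2) / 2))) = \<dots>" .
  qed
  also have "\<dots> \<le> (\<Sum>j<m. cmod r * ?e * g j)"
  proof (rule sum_mono)
    fix j assume j: "j \<in> {..<m}"
    have "(\<Sum>b<m. (?A j b)\<^sup>2) \<le> 1"
      using row_part[of "\<lambda>y. (cmod (u (m+j) y))\<^sup>2" 0 m] rows[of "m+j"] j by simp
    moreover have "(\<Sum>b<m. (?B j b)\<^sup>2) \<le> 1"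
      using row_part[of "\<lambda>y. (cmod (u (2*m+j) y))\<^sup>2" 1 m] rows[of "2*m+j"] j by simp
    ultimately have "g j * ((\<Sum>b<m. (?A j b)\<^sup>2) + (\<Sum>b<m. (?B j b)\<^sup>2)) / 2 \<le> g j"
      using gnn[of j] j by (simp add: mult_left_mono)
    then show "cmod r * ?e * (g j * ((\<Sum>b<m. (?A j b)\<^sup>2) + (\<Sum>b<m. (?B j b)\<^sup>2)) / 2) \<le> cmod r * ?e * g j"
      by (intro mult_left_mono) auto
  qed
  also have "\<dots> = cmod r * ?e * (\<Sum>j<m. g j)" by (simp add: sum_distrib_left)
  finally show ?thesis using gsum by (simp add: mult.commute)
qed

lemma adj_adj: "mat_adjoint (mat_adjoint A) = (A :: complex mat)"
  by (rule eq_matI) auto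

lemma adj_one: "mat_adjoint (1\<^sub>m n :: complex mat) = 1\<^sub>m n"
  by (rule eq_matI) auto

lemma adj_mult: fixes A B :: "complex mat" assumes "A \<in> carrier_mat p q" "B \<in> carrier_mat q r"
  shows "mat_adjoint (A * B) = mat_adjoint B * mat_adjoint A"
proof (rule eq_matI)
  fix i j assume ij: "i < dim_row (mat_adjoint B * mat_adjoint A)" "j < dim_col (mat_adjoint B * mat_adjoint A)"
  then have i: "i < r" and j: "j < p" using assms by auto
  have e: "(A*B) $$ (j,i) = (\<Sum>k<q. A $$ (j,k) * B $$ (k,i))"
    using assms i j by (subst mult_entry) auto
  have "mat_adjoint (A * B) $$ (i,j) = cnj (\<Sum>k<q. A $$ (j,k) * B $$ (k,i))"
    using assms i j e by simp
  also have "\<dots> = (\<Sum>k<q. mat_adjoint B $$ (i,k) * mat_adjoint A $$ (k,j))"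
    using assms i j by (auto simp: mult.commute intro!: sum.cong)
  also have "\<dots> = (mat_adjoint B * mat_adjoint A) $$ (i,j)"
    using assms i j by (subst mult_entry) auto
  finally show "mat_adjoint (A * B) $$ (i,j) = (mat_adjoint B * mat_adjoint A) $$ (i,j)" .
qed (use assms in auto)

lemma kron_one: "kron (1\<^sub>m n) (1\<^sub>m m) = (1\<^sub>m (n*m) :: complex mat)"
proof (rule eq_matI)
  fix i j assume "i < dim_row (1\<^sub>m (n * m) :: complex mat)" "j < dim_col (1\<^sub>m (n * m) :: complex mat)"
  then have i: "i < n*m" and j: "j < n*m" by auto
  then have m: "m > 0" by (auto intro!: Nat.gr0I)
  have "i div m < n" "j div m < n" using i j by (auto simp: less_mult_imp_div_less)
  moreover have "(i div m = j div m \<and> i mod m = j mod m) = (i = j)"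
    by (metis div_mult_mod_eq)
  ultimately show "kron (1\<^sub>m n) (1\<^sub>m m) $$ (i, j) = (1\<^sub>m (n*m) :: complex mat) $$ (i, j)"
    using i j m by (auto simp: kron_index)
qed auto

lemma M_entry:
  fixes Up \<rho> :: "complex mat" and gc :: "nat \<Rightarrow> complex"
  assumes Up: "Up \<in> carrier_mat (n*m) (n*m)" and rho: "\<rho> \<in> carrier_mat n n" and m: "m > 0"
    and x: "x < n*m" and z: "z < n*m"
  shows "(Up * kron \<rho> (mat_diag m gc) * mat_adjoint Up) $$ (x,z) =
    (\<Sum>a<n. \<Sum>a'<n. \<Sum>b<m. Up $$ (x,a*m+b) * \<rho> $$ (a,a') * gc b * cnj (Up $$ (z, a'*m+b)))"
proof -
  let ?Y = "kron \<rho> (mat_diag m gc)"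
  have Y: "?Y \<in> carrier_mat (n*m) (n*m)" using rho by (metis kron_carrier mat_diag_dim)
  have Yi: "?Y $$ (a*m+b, a'*m+b') = \<rho> $$ (a,a') * (if b = b' then gc b else 0)"
    if "a < n" "a' < n" "b < m" "b' < m" for a a' b b'
    using that rho lt_idx[of a n b m] lt_idx[of a' n b' m] by (simp add: kron_index mat_diag_def)
  have UY: "(Up * ?Y) $$ (x, a'*m+b') = (\<Sum>a<n. Up $$ (x,a*m+b') * \<rho> $$ (a,a') * gc b')"
    if a': "a' < n" and b': "b' < m" for a' b'
  proof -
    have "(Up * ?Y) $$ (x, a'*m+b') = (\<Sum>y<n*m. Up $$ (x,y) * ?Y $$ (y, a'*m+b'))"
      using Up Y x lt_idx[OF a' b'] by (subst mult_entry) auto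
    also have "\<dots> = (\<Sum>a<n. \<Sum>b<m. Up $$ (x,a*m+b) * ?Y $$ (a*m+b, a'*m+b'))"
      by (rule sum_prod_index)
    also have "\<dots> = (\<Sum>a<n. \<Sum>b<m. if b' = b then Up $$ (x,a*m+b) * \<rho> $$ (a,a') * gc b else 0)"
      using Yi a' b' by (intro sum.cong refl) auto
    also have "\<dots> = (\<Sum>a<n. Up $$ (x,a*m+b') * \<rho> $$ (a,a') * gc b')"
      using b' by simp
    finally show ?thesis .
  qed
  have "(Up * ?Y * mat_adjoint Up) $$ (x,z) = (\<Sum>w<n*m. (Up * ?Y) $$ (x,w) * mat_adjoint Up $$ (w,z))"
    using Up Y x z by (subst mult_entry) auto
  also have "\<dots> = (\<Sum>a'<n. \<Sum>b<m. (Up * ?Y) $$ (x,a'*m+b) * mat_adjoint Up $$ (a'*m+b,z))"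
    by (rule sum_prod_index)
  also have "\<dots> = (\<Sum>a'<n. \<Sum>b<m. \<Sum>a<n. Up $$ (x,a*m+b) * \<rho> $$ (a,a') * gc b * cnj (Up $$ (z, a'*m+b)))"
    using UY Up z lt_idx by (intro sum.cong refl) (auto simp: sum_distrib_right)
  also have "\<dots> = (\<Sum>a'<n. \<Sum>a<n. \<Sum>b<m. Up $$ (x,a*m+b) * \<rho> $$ (a,a') * gc b * cnj (Up $$ (z, a'*m+b)))"
    by (rule sum.cong[OF refl], rule sum.swap)
  also have "\<dots> = (\<Sum>a<n. \<Sum>a'<n. \<Sum>b<m. Up $$ (x,a*m+b) * \<rho> $$ (a,a') * gc b * cnj (Up $$ (z, a'*m+b)))"
    by (rule sum.swap)
  finally show ?thesis .
qed



lemma mat_diag_dims[simp]: "dim_row (mat_diag n f) = n" "dim_col (mat_diag n f) = n"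
  unfolding mat_diag_def by auto

theorem mainTheorem17:
  fixes \<beta> E0 E1 E2 \<Delta>E :: real and \<rho> :: "complex mat"
    and T :: "complex mat \<Rightarrow> complex mat"
  assumes "\<beta> > 0"
    and "\<Delta>E > 0" and "E1 - E0 = \<Delta>E" and "E2 - E1 = \<Delta>E"
    and "density_mat 3 \<rho>"
    and "\<rho> $$ (1,2) = 0"
    and "thermal_operation \<beta> 3
           (mat_diag 3 (\<lambda>i. complex_of_real ([E0, E1, E2] ! i))) T"
  shows "cmod (T \<rho> $$ (1,2)) \<le> exp (- \<beta> * \<Delta>E) * cmod (\<rho> $$ (0,1))"
proof -
  define Es where "Es = (\<lambda>i::nat. [E0, E1, E2] ! i)"
  define HS where "HS = mat_diag 3 (\<lambda>i. complex_of_real (Es i))"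
  from assms(7) obtain m HB \<gamma> U where m: "0 < m" and gib: "is_gibbs_state \<beta> m HB \<gamma>"
    and Uu: "unitary_mat (3*m) U"
    and comm: "U * (kron HS (1\<^sub>m m) + kron (1\<^sub>m 3) HB) = (kron HS (1\<^sub>m m) + kron (1\<^sub>m 3) HB) * U"
    and Tdef: "\<forall>\<rho> \<in> carrier_mat 3 3. T \<rho> = ptrace2 m (U * kron \<rho> \<gamma> * mat_adjoint U)"
    unfolding thermal_operation_def HS_def Es_def by blast
  from gib obtain Ex where ex: "is_exp_neg_beta \<beta> m HB Ex" and gam: "\<gamma> = (1 / mtrace Ex) \<cdot>\<^sub>m Ex"
    unfolding is_gibbs_state_def by blast
  from ex obtain V d where Vu: "unitary_mat m V"
    and HBd: "HB = V * mat_diag m (\<lambda>i. complex_of_real (d i)) * mat_adjoint V"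
    and Exd: "Ex = V * mat_diag m (\<lambda>i. complex_of_real (exp (- \<beta> * d i))) * mat_adjoint V"
    unfolding is_exp_neg_beta_def by blast
  have rho: "\<rho> \<in> carrier_mat 3 3" using assms(5) unfolding density_mat_def hermitian_mat_def by auto
  have V: "V \<in> carrier_mat m m" and VaV: "mat_adjoint V * V = 1\<^sub>m m" and VVa: "V * mat_adjoint V = 1\<^sub>m m"
    using Vu unfolding unitary_mat_def by auto
  have U: "U \<in> carrier_mat (3*m) (3*m)" and UaU: "mat_adjoint U * U = 1\<^sub>m (3*m)" and UUa: "U * mat_adjoint U = 1\<^sub>m (3*m)"
    using Uu unfolding unitary_mat_def by auto
  define Va where "Va = mat_adjoint V"
  have Va: "Va \<in> carrier_mat m m" using V unfolding Va_def by (metis adj_carrier carrier_matD)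
  have Ua: "mat_adjoint U \<in> carrier_mat (3*m) (3*m)" using U by (metis adj_carrier carrier_matD)
  define W where "W = kron (1\<^sub>m 3) V"
  define Wa where "Wa = kron (1\<^sub>m 3) Va"
  have W: "W \<in> carrier_mat (3*m) (3*m)" unfolding W_def using V by (metis kron_carrier one_carrier_mat)
  have Wa: "Wa \<in> carrier_mat (3*m) (3*m)" unfolding Wa_def using Va by (metis kron_carrier one_carrier_mat)
  have WWa: "W * Wa = 1\<^sub>m (3*m)"
    unfolding W_def Wa_def using V Va m by (simp add: kron_mult[of _ 3 3 _ m m _ 3 _ m] VVa[folded Va_def] kron_one)
  have WaW: "Wa * W = 1\<^sub>m (3*m)"
    unfolding W_def Wa_def using V Va m by (simp add: kron_mult[of _ 3 3 _ m m _ 3 _ m] VaV[folded Va_def] kron_one)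
  have adjW: "mat_adjoint W = Wa" unfolding W_def Wa_def Va_def by (simp add: kron_adj adj_one)
  have adjWa: "mat_adjoint Wa = W" using adjW adj_adj by metis
  define Up where "Up = Wa * U * W"
  have Up: "Up \<in> carrier_mat (3*m) (3*m)" unfolding Up_def using U W Wa by auto
  have adjUp: "mat_adjoint Up = Wa * mat_adjoint U * W"
    unfolding Up_def using U W Wa by (simp add: adj_mult[of _ "3*m" "3*m" _ "3*m"] adjW adjWa)
  define e where "e = (\<lambda>i. exp (- \<beta> * d i))"
  define Z where "Z = (\<Sum>i<m. e i)"
  have epos: "e i > 0" for i unfolding e_def by simp
  have Zpos: "Z > 0" unfolding Z_def using m epos by (intro sum_pos) auto
  define g where "g = (\<lambda>i. e i / Z)"
  have VD: "V * mat_diag m (\<lambda>i. complex_of_real (e i)) = Matrix.mat m m (\<lambda>(i,j). V $$ (i,j) * e j)"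
    using V by (rule mat_diag_mult_right)
  have trEx: "mtrace Ex = complex_of_real Z"
  proof -
    have Exd': "Ex = Matrix.mat m m (\<lambda>(i,j). V $$ (i,j) * e j) * Va"
      using Exd VD by (simp add: e_def Va_def)
    have "mtrace Ex = (\<Sum>i<m. Ex $$ (i,i))" unfolding mtrace_def using Exd' Va by simp
    also have "\<dots> = (\<Sum>i<m. \<Sum>k<m. V $$ (i,k) * e k * Va $$ (k,i))"
    proof (rule sum.cong[OF refl])
      fix i assume i: "i \<in> {..<m}"
      show "Ex $$ (i,i) = (\<Sum>k<m. V $$ (i,k) * e k * Va $$ (k,i))"
        unfolding Exd' using i Va by (subst mult_entry) auto
    qed
    also have "\<dots> = (\<Sum>k<m. e k * (\<Sum>i<m. Va $$ (k,i) * V $$ (i,k)))"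
      by (subst sum.swap) (simp add: sum_distrib_left mult_ac)
    also have "\<dots> = (\<Sum>k<m. complex_of_real (e k))"
    proof (rule sum.cong[OF refl])
      fix k assume k: "k \<in> {..<m}"
      have "(\<Sum>i<m. Va $$ (k,i) * V $$ (i,k)) = (Va * V) $$ (k,k)"
        using V Va k by (subst mult_entry) auto
      also have "\<dots> = 1" using VaV k unfolding Va_def by simp
      finally show "e k * (\<Sum>i<m. Va $$ (k,i) * V $$ (i,k)) = complex_of_real (e k)" by simp
    qed
    finally show ?thesis unfolding Z_def by simp
  qed
  define Gd where "Gd = mat_diag m (\<lambda>i. complex_of_real (g i))"
  define Ed where "Ed = mat_diag m (\<lambda>i. complex_of_real (e i))"
  have Ed: "Ed \<in> carrier_mat m m" unfolding Ed_def by simp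
  have Exe: "Ex = V * Ed * Va" unfolding Exd Ed_def e_def Va_def by simp
  have gam': "\<gamma> = (1 / complex_of_real Z) \<cdot>\<^sub>m (V * Ed * Va)" using gam trEx Exe by simp
  have gamc: "\<gamma> \<in> carrier_mat m m" unfolding gam' using V Ed Va by auto
  have G: "Va * \<gamma> * V = Gd"
  proof -
    have "Va * \<gamma> * V = (1 / complex_of_real Z) \<cdot>\<^sub>m (Va * (V * Ed * Va) * V)"
      unfolding gam' using V Ed Va
      by (simp add: mult_smult_distrib[of _ m m _ m] mult_smult_assoc_mat[of _ m m _ m])
    also have "Va * (V * Ed * Va) * V = (Va * V) * Ed * (Va * V)"
      using V Ed Va by (simp add: assoc_mult_mat[of _ m m _ m _ m])
    also have "\<dots> = Ed" using VaV Ed unfolding Va_def by simp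
    also have "(1 / complex_of_real Z) \<cdot>\<^sub>m Ed = Gd"
      unfolding Ed_def Gd_def g_def by (rule eq_matI) (auto simp: mat_diag_def)
    finally show ?thesis .
  qed
  have Y: "Wa * kron \<rho> \<gamma> * W = kron \<rho> Gd"
  proof -
    have "Wa * kron \<rho> \<gamma> = kron (1\<^sub>m 3 * \<rho>) (Va * \<gamma>)"
      unfolding Wa_def using rho Va gamc m by (intro kron_mult) auto
    also have "\<dots> * W = kron (1\<^sub>m 3 * \<rho> * 1\<^sub>m 3) (Va * \<gamma> * V)"
      unfolding W_def using rho Va gamc m V by (intro kron_mult) auto
    finally show ?thesis using G rho by simp
  qed
  have Uexp: "U = W * Up * Wa"
  proof -
    have "W * Up * Wa = (W * Wa) * U * (W * Wa)" unfolding Up_def using W Wa U by (simp add: assoc_mult_mat[of _ "3*m" "3*m" _ "3*m" _ "3*m"])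
    then show ?thesis using WWa U by simp
  qed
  have Uaexp: "mat_adjoint U = W * mat_adjoint Up * Wa"
  proof -
    have "W * mat_adjoint Up * Wa = (W * Wa) * mat_adjoint U * (W * Wa)" unfolding adjUp using W Wa Ua by (simp add: assoc_mult_mat[of _ "3*m" "3*m" _ "3*m" _ "3*m"])
    then show ?thesis using WWa carrier_matD[OF Ua] by simp
  qed
  have X: "kron \<rho> \<gamma> \<in> carrier_mat (3*m) (3*m)" using rho gamc by (metis kron_carrier)
  have Xexp: "kron \<rho> \<gamma> = W * kron \<rho> Gd * Wa"
  proof -
    have "W * (Wa * kron \<rho> \<gamma> * W) * Wa = (W * Wa) * kron \<rho> \<gamma> * (W * Wa)" using W Wa X by (simp add: assoc_mult_mat[of _ "3*m" "3*m" _ "3*m" _ "3*m"])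
    then show ?thesis using WWa carrier_matD[OF X] Y by simp
  qed
  have Gdc: "Gd \<in> carrier_mat m m" unfolding Gd_def by simp
  have Yc: "kron \<rho> Gd \<in> carrier_mat (3*m) (3*m)" using rho Gdc by (metis kron_carrier)
  have Upa: "mat_adjoint Up \<in> carrier_mat (3*m) (3*m)" using Up by (metis adj_carrier carrier_matD)
  have UXU: "U * kron \<rho> \<gamma> * mat_adjoint U = W * (Up * kron \<rho> Gd * mat_adjoint Up) * Wa"
  proof -
    have "U * kron \<rho> \<gamma> * mat_adjoint U = (W * Up * Wa) * (W * kron \<rho> Gd * Wa) * (W * mat_adjoint Up * Wa)"
      using Uexp Xexp Uaexp by metis
    also have "\<dots> = W * Up * (Wa * W) * kron \<rho> Gd * (Wa * W) * mat_adjoint Up * Wa"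
      using W Wa Up Upa Yc by (simp add: assoc_mult_mat[of _ "3*m" "3*m" _ "3*m" _ "3*m"])
    also have "\<dots> = W * (Up * kron \<rho> Gd * mat_adjoint Up) * Wa"
      using W Wa Up Upa Yc WaW by (simp add: assoc_mult_mat[of _ "3*m" "3*m" _ "3*m" _ "3*m"])
    finally show ?thesis .
  qed
  define M where "M = Up * kron \<rho> Gd * mat_adjoint Up"
  have Mc: "M \<in> carrier_mat (3*m) (3*m)" unfolding M_def using Up Yc Upa by auto
  have Trho: "T \<rho> = ptrace2 m M"
    using Tdef rho UXU ptrace_conj[OF V m VaV Mc] unfolding M_def W_def Wa_def Va_def by simp
  define h where "h = (\<lambda>x. Es (x div m) + d (x mod m))"
  define Dm where "Dm = mat_diag (3*m) (\<lambda>x. complex_of_real (h x))"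
  define Dd where "Dd = mat_diag m (\<lambda>i. complex_of_real (d i))"
  define Ht where "Ht = kron HS (1\<^sub>m m) + kron (1\<^sub>m 3) HB"
  have HSc: "HS \<in> carrier_mat 3 3" unfolding HS_def by simp
  have Ddc: "Dd \<in> carrier_mat m m" unfolding Dd_def by simp
  have HBe: "HB = V * Dd * Va" unfolding HBd Dd_def Va_def by simp
  have HBc: "HB \<in> carrier_mat m m" unfolding HBe using V Ddc Va by auto
  have K1c: "kron HS (1\<^sub>m m) \<in> carrier_mat (3*m) (3*m)" using HSc by (metis kron_carrier one_carrier_mat)
  have K2c: "kron (1\<^sub>m 3) HB \<in> carrier_mat (3*m) (3*m)" using HBc by (metis kron_carrier one_carrier_mat)
  have Htc: "Ht \<in> carrier_mat (3*m) (3*m)" unfolding Ht_def using K1c K2c by auto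
  have VHV: "Va * HB * V = Dd"
  proof -
    have "Va * HB * V = (Va * V) * Dd * (Va * V)"
      unfolding HBe using V Ddc Va by (simp add: assoc_mult_mat[of _ m m _ m _ m])
    also have "\<dots> = Dd" using VaV Ddc unfolding Va_def by simp
    finally show ?thesis .
  qed
  have D1: "Wa * kron HS (1\<^sub>m m) * W = kron HS (1\<^sub>m m)"
  proof -
    have "Wa * kron HS (1\<^sub>m m) = kron (1\<^sub>m 3 * HS) (Va * 1\<^sub>m m)"
      unfolding Wa_def using HSc Va m by (intro kron_mult) auto
    also have "\<dots> * W = kron (1\<^sub>m 3 * HS * 1\<^sub>m 3) (Va * 1\<^sub>m m * V)"
      unfolding W_def using HSc Va m V by (intro kron_mult) auto
    finally show ?thesis using HSc carrier_matD[OF V] VaV unfolding Va_def by simp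
  qed
  have D2: "Wa * kron (1\<^sub>m 3) HB * W = kron (1\<^sub>m 3) Dd"
  proof -
    have "Wa * kron (1\<^sub>m 3) HB = kron (1\<^sub>m 3 * 1\<^sub>m 3) (Va * HB)"
      unfolding Wa_def using HBc Va m by (intro kron_mult) auto
    also have "\<dots> * W = kron (1\<^sub>m 3 * 1\<^sub>m 3 * 1\<^sub>m 3) (Va * HB * V)"
      unfolding W_def using HBc Va m V by (intro kron_mult) auto
    finally show ?thesis using VHV by simp
  qed
  have KD: "kron HS (1\<^sub>m m) + kron (1\<^sub>m 3) Dd = Dm"
  proof (rule eq_matI)
    fix x y assume "x < dim_row Dm" "y < dim_col Dm"
    then have x: "x < 3*m" and y: "y < 3*m" unfolding Dm_def by auto
    have xd: "x div m < 3" "y div m < 3" "x mod m < m" "y mod m < m" using x y m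
      by (auto simp: less_mult_imp_div_less)
    have iff: "(x div m = y div m \<and> x mod m = y mod m) = (x = y)" by (metis div_mult_mod_eq)
    show "(kron HS (1\<^sub>m m) + kron (1\<^sub>m 3) Dd) $$ (x,y) = Dm $$ (x,y)"
      using x y xd iff HSc Ddc unfolding Dm_def HS_def Dd_def h_def
      by (auto simp: kron_index mat_diag_def)
  qed (use HSc Ddc in \<open>auto simp: Dm_def\<close>)
  have WHW: "Wa * Ht * W = Dm"
    unfolding Ht_def using Wa W K1c K2c D1 D2 KD
    by (simp add: mult_add_distrib_mat[of _ "3*m" "3*m"] add_mult_distrib_mat[of _ "3*m" "3*m"])
  have commUp: "Up * Dm = Dm * Up"
  proof -
    have "Up * Dm = Wa * (U * ((W * Wa) * (Ht * W)))"
      unfolding Up_def WHW[symmetric] using Wa U W Htc by (simp add: assoc_mult_mat[of _ "3*m" "3*m" _ "3*m" _ "3*m"])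
    also have "\<dots> = Wa * ((U * Ht) * W)" using WWa Htc W U by (simp add: assoc_mult_mat[of _ "3*m" "3*m" _ "3*m" _ "3*m"])
    also have "\<dots> = Wa * ((Ht * U) * W)" using comm unfolding Ht_def by simp
    also have "\<dots> = Wa * (Ht * ((W * Wa) * (U * W)))" using WWa Htc W U by (simp add: assoc_mult_mat[of _ "3*m" "3*m" _ "3*m" _ "3*m"])
    also have "\<dots> = Dm * Up"
      unfolding Up_def WHW[symmetric] using Wa U W Htc by (simp add: assoc_mult_mat[of _ "3*m" "3*m" _ "3*m" _ "3*m"])
    finally show ?thesis .
  qed
  have energy: "h x = h y" if x: "x < 3*m" and y: "y < 3*m" and nz: "Up $$ (x,y) \<noteq> 0" for x y
  proof -
    have "(Up * Dm) $$ (x,y) = Up $$ (x,y) * complex_of_real (h y)"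
      unfolding Dm_def using Up x y by (subst mat_diag_mult_right) auto
    moreover have "(Dm * Up) $$ (x,y) = complex_of_real (h x) * Up $$ (x,y)"
      unfolding Dm_def using Up x y by (subst mat_diag_mult_left) auto
    ultimately have "Up $$ (x,y) * complex_of_real (h y) = Up $$ (x,y) * complex_of_real (h x)"
      using commUp by (metis mult.commute)
    then show ?thesis using nz by simp
  qed
  have UpUpa: "Up * mat_adjoint Up = 1\<^sub>m (3*m)"
  proof -
    have "Up * mat_adjoint Up = (Wa * U * W) * (Wa * mat_adjoint U * W)"
      by (simp only: adjUp) (simp add: Up_def)
    also have "\<dots> = Wa * (U * ((W * Wa) * (mat_adjoint U * W)))"
      using Wa U W Ua by (simp add: assoc_mult_mat[of _ "3*m" "3*m" _ "3*m" _ "3*m"])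
    also have "\<dots> = Wa * ((U * mat_adjoint U) * W)" using WWa Ua W U by (simp add: assoc_mult_mat[of _ "3*m" "3*m" _ "3*m" _ "3*m"])
    also have "\<dots> = 1\<^sub>m (3*m)" using UUa WaW W by simp
    finally show ?thesis .
  qed
  have rows: "(\<Sum>y<3*m. (cmod (Up $$ (x,y)))\<^sup>2) = 1" if x: "x < 3*m" for x
  proof -
    have "complex_of_real (\<Sum>y<3*m. (cmod (Up $$ (x,y)))\<^sup>2) = (\<Sum>y<3*m. Up $$ (x,y) * mat_adjoint Up $$ (y,x))"
      using Up x by (auto simp: complex_norm_square[symmetric] intro!: sum.cong)
    also have "\<dots> = (Up * mat_adjoint Up) $$ (x,x)"
      using Up Upa x by (subst mult_entry) auto
    also have "\<dots> = 1" using UpUpa x by simp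
    finally show ?thesis by (metis of_real_eq_1_iff)
  qed
  define F where "F = (\<lambda>j a a' b. Up $$ (m+j, a*m+b) * \<rho> $$ (a,a') * complex_of_real (g b) * cnj (Up $$ (2*m+j, a'*m+b)))"
  have Fz: "F j a a' b = 0" if j: "j < m" and a: "a < 3" and a': "a' < 3" and b: "b < m" and ne: "(a,a') \<noteq> (0,1)" for j a a' b
  proof (rule ccontr)
    assume nz: "F j a a' b \<noteq> 0"
    then have n1: "Up $$ (m+j, a*m+b) \<noteq> 0" and n2: "Up $$ (2*m+j, a'*m+b) \<noteq> 0" and n3: "\<rho> $$ (a,a') \<noteq> 0"
      unfolding F_def by auto
    have "h (m+j) = h (a*m+b)" using energy[OF _ _ n1] lt_idx[OF a b] j by simp
    then have e1: "Es 1 + d j = Es a + d b" unfolding h_def using j b by simp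
    have "h (2*m+j) = h (a'*m+b)" using energy[OF _ _ n2] lt_idx[OF a' b] j by simp
    then have e2: "Es 2 + d j = Es a' + d b" unfolding h_def using j b by simp
    have "Es a' - Es a = \<Delta>E" using e1 e2 assms(4) unfolding Es_def by simp
    moreover have "a \<in> {0,1,2}" "a' \<in> {0,1,2}" using a a' by auto
    ultimately have "(a,a') = (1,2)" using ne assms(2,3,4) unfolding Es_def
      by auto
    then show False using n3 assms(6) by simp
  qed
  have Ment: "M $$ (m+j, 2*m+j) = (\<Sum>b<m. F j 0 1 b)" if j: "j < m" for j
  proof -
    have "M $$ (m+j, 2*m+j) = (\<Sum>a<3. \<Sum>a'<3. \<Sum>b<m. F j a a' b)"
      unfolding M_def Gd_def F_def using M_entry[OF Up[unfolded Gd_def] rho m, of "m+j" "2*m+j"] j by simp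
    also have "\<dots> = (\<Sum>b<m. F j 0 1 b)"
    proof -
      have "(\<Sum>a<3. \<Sum>a'<3. \<Sum>b<m. F j a a' b) = (\<Sum>a<3::nat. \<Sum>a'<3::nat. if a = 0 then (if a' = 1 then (\<Sum>b<m. F j 0 1 b) else 0) else 0)"
        using Fz[OF j] by (intro sum.cong refl) (auto intro!: sum.neutral)
      also have "\<dots> = (\<Sum>b<m. F j 0 1 b)" by (simp add: eval_nat_numeral)
      finally show ?thesis .
    qed
    finally show ?thesis .
  qed
  have "T \<rho> $$ (1,2) = (\<Sum>j<m. M $$ (1*m+j, 2*m+j))"
    unfolding Trho using Mc m by (subst ptrace_index) auto
  also have "\<dots> = (\<Sum>j<m. \<Sum>b<m. Up $$ (m+j, b) * \<rho> $$ (0,1) * complex_of_real (g b) * cnj (Up $$ (2*m+j, m+b)))"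
    using Ment unfolding F_def by simp
  finally have Tent: "T \<rho> $$ (1,2) = \<dots>" .
  show ?thesis unfolding Tent
  proof (rule core[where Es = Es and d = d])
    show "g b \<ge> 0" for b unfolding g_def using epos[of b] Zpos by simp
    show "(\<Sum>b<m. g b) = 1" unfolding g_def Z_def using Zpos[unfolded Z_def] by (simp add: sum_divide_distrib[symmetric])
    show "g b = exp (- \<beta> * \<Delta>E) * g j" if "d b = d j + \<Delta>E" for j b
      unfolding g_def e_def using that by (simp add: algebra_simps exp_add[symmetric])
    show "Es 1 - Es 0 = \<Delta>E" unfolding Es_def using assms(3) by simp
    show "Es (x div m) + d (x mod m) = Es (y div m) + d (y mod m)"
      if "x < 3*m" "y < 3*m" "Up $$ (x,y) \<noteq> 0" for x y
      using energy[OF that] unfolding h_def .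
    show "(\<Sum>y<3*m. (cmod (Up $$ (x,y)))\<^sup>2) = 1" if "x < 3*m" for x using rows[OF that] .
  qed
qed

end
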